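(* Let $\mathcal H$ be a class of functions $\mathcal X\to[-1,1]$ and $\mathcal F$ a class of functions $\mathcal Z\to[-1,1]$, and let samples $(y_i,x_i,z_i)_{i=1}^n$ with $y_i\in[-1,1]$ be given. Assume access to $\mathrm{Oracle}_{\mathcal F}(z_{1:n},u_{1:n})\in\arg\min_{f\in\mathcal F}\frac1n\sum_i(u_i-f(z_i))^2$ and $\mathrm{Oracle}_{\mathcal H}(x_{1:n},v_{1:n},w_{1:n})\in\arg\max_{h\in\mathcal H}\frac1n\sum_iw_i\Pr_{\xi_i\sim\mathrm{Bernoulli}((1+h(x_i))/2)}[v_i=\xi_i]$. Consider the algorithm that for $t=1,\dots,T$ sets $$u_i^t=\tfrac12\Big(y_i-\tfrac1{t-1}\textstyle\sum_{\tau=1}^{t-1}h_\tau(x_i)\Big),\quad f_t=\mathrm{Oracle}_{\mathcal F}(z_{1:n},u^t_{1:n}),$$ $$v_i^t=\mathbf 1\{f_t(z_i)>0\},\quad w_i^t=|f_t(z_i)|,\quad h_t=\mathrm{Oracle}_{\mathcal H}(x_{1:n},v^t_{1:n},w^t_{1:n})$$ (for $t=1$ the empty average is interpreted as $0$). Suppose the set $A=\{(f(z_1),\dots,f(z_n)):f\in\mathcal F\}$ is convex. Then the ensemble $\bar h=\frac1T\sum_{t=1}^Th_t$ is an $\frac{8(\log T+1)}{T}$-approximate solution to the minimax problem $\min_{h\in\mathcal H}\sup_{f\in\mathcal F}\Psi_n(h,f)-\|f\|_{2,n}^2$, i.e. $\sup_{f\in\mathcal F}\big(\Psi_n(\bar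 h,f)-\|f\|_{2,n}^2\big)\le\inf_{h\in\mathcal H}\sup_{f\in\mathcal F}\big(\Psi_n(h,f)-\|f\|_{2,n}^2\big)+\frac{8(\log T+1)}{T}$.
   Context: $\Psi_n(h,f)=\frac1n\sum_i(y_i-h(x_i))f(z_i)$ and $\|f\|_{2,n}^2=\frac1n\sum_if(z_i)^2$. *)

theory Defs
  imports "HOL-Analysis.Analysis"
begin

text \<open>Samples are indexed by a finite type 'n, so n = CARD('n) \<ge> 1.\<close>

definition Psi_n :: "('n::finite \<Rightarrow> real) \<Rightarrow> ('n \<Rightarrow> 'x) \<Rightarrow> ('n \<Rightarrow> 'z)
    \<Rightarrow> ('x \<Rightarrow> real) \<Rightarrow> ('z \<Rightarrow> real) \<Rightarrow> real" where
  "Psi_n y x z h f = (1 / real CARD('n)) * (\<Sum>i\<in>UNIV. (y i - h (x i)) * f (z i))"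

definition norm2n_sq :: "('n::finite \<Rightarrow> 'z) \<Rightarrow> ('z \<Rightarrow> real) \<Rightarrow> real" where
  "norm2n_sq z f = (1 / real CARD('n)) * (\<Sum>i\<in>UNIV. (f (z i))^2)"

text \<open>Pr over xi ~ Bernoulli(p) on {0,1} that v = xi, with v encoded as a bool (True = 1).\<close>
definition bern_agree :: "real \<Rightarrow> bool \<Rightarrow> real" where
  "bern_agree p v = (if v then p else 1 - p)"

definition oracleH_obj :: "('n::finite \<Rightarrow> 'x) \<Rightarrow> ('n \<Rightarrow> bool) \<Rightarrow> ('n \<Rightarrow> real)
    \<Rightarrow> ('x \<Rightarrow> real) \<Rightarrow> real" where
  "oracleH_obj x v w h = (1 / real CARD('n)) *
     (\<Sum>i\<in>UNIV. w i * bern_agree ((1 + h (x i)) / 2) (v i))"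

definition oracleF_obj :: "('n::finite \<Rightarrow> 'z) \<Rightarrow> ('n \<Rightarrow> real) \<Rightarrow> ('z \<Rightarrow> real) \<Rightarrow> real" where
  "oracleF_obj z u f = (1 / real CARD('n)) * (\<Sum>i\<in>UNIV. (u i - f (z i))^2)"

definition prev_avg :: "(nat \<Rightarrow> 'x \<Rightarrow> real) \<Rightarrow> nat \<Rightarrow> 'x \<Rightarrow> real" where
  "prev_avg hs t a = (if t \<le> 1 then 0 else (1 / real (t - 1)) * (\<Sum>\<tau>=1..t-1. hs \<tau> a))"

end

theory Submission
  imports Defs
begin


lemma harm_bound:
  fixes m :: nat
  assumes "m \<ge> 1"
  shows "(\<Sum>j=1..m. 1 / real j) \<le> 1 + ln (real m)"
  using assms
proof (induction m rule: nat_induct_at_least)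
  case base
  then show ?case by simp
next
  case (Suc m)
  have mpos: "real m > 0" using Suc.hyps by simp
  have "ln (real m / (real m + 1)) \<le> real m / (real m + 1) - 1"
    using mpos by (intro ln_le_minus_one) simp
  also have "\<dots> = - 1 / (real m + 1)" using mpos by (simp add: field_simps)
  finally have "1 / (real m + 1) \<le> ln (real m + 1) - ln (real m)"
    using mpos by (simp add: ln_div)
  then show ?case using Suc.IH by (simp add: add.commute)
qed

lemma step_lemma:
  fixes D c a v :: "'n::finite \<Rightarrow> real" and m :: real and W :: "('n \<Rightarrow> real) set"
  assumes mpos: "m > 0"
    and opt: "\<forall>w\<in>W. (\<Sum>i\<in>UNIV. D i * w i - m * (w i)^2) \<le> (\<Sum>i\<in>UNIV. D i * a i - m * (a i)^2)"
    and seg: "\<forall>s\<in>{0<..1}. (\<lambda>i. a i + s * (v i - a i)) \<in> W"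
    and cb: "\<forall>i. \<bar>c i\<bar> \<le> 2" and vb: "\<forall>i. \<bar>v i\<bar> \<le> 1" and ab: "\<forall>i. \<bar>a i\<bar> \<le> 1"
  shows "(\<Sum>i\<in>UNIV. D i * v i - m * (v i)^2) + (\<Sum>i\<in>UNIV. c i * v i - (v i)^2)
     \<le> (\<Sum>i\<in>UNIV. D i * a i - m * (a i)^2) + (\<Sum>i\<in>UNIV. c i * a i - (a i)^2)
        + 4 * real CARD('n) / m"
proof -
  define P where "P = (\<Sum>i\<in>UNIV. (D i - 2 * m * a i) * (v i - a i))"
  define Q where "Q = (\<Sum>i\<in>UNIV. (v i - a i)^2)"
  have Qnn: "Q \<ge> 0" unfolding Q_def by (intro sum_nonneg) simp
  have expand: "(\<Sum>i\<in>UNIV. D i * (a i + s * (v i - a i)) - m * (a i + s * (v i - a i))^2)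
      - (\<Sum>i\<in>UNIV. D i * a i - m * (a i)^2) = s * P - s^2 * m * Q" for s
  proof -
    have "(\<Sum>i\<in>UNIV. D i * (a i + s * (v i - a i)) - m * (a i + s * (v i - a i))^2)
      - (\<Sum>i\<in>UNIV. D i * a i - m * (a i)^2)
      = (\<Sum>i\<in>UNIV. s * ((D i - 2 * m * a i) * (v i - a i)) - s^2 * m * (v i - a i)^2)"
      by (simp add: sum_subtractf[symmetric]) (rule sum.cong, simp_all add: power2_eq_square algebra_simps)
    also have "\<dots> = s * P - s^2 * m * Q"
      by (simp add: sum_subtractf sum_distrib_left P_def Q_def)
    finally show ?thesis .
  qed
  have Ple: "P \<le> s * m * Q" if "s \<in> {0<..1}" for s
  proof -
    have "s * P - s^2 * m * Q \<le> 0" using opt seg that expand[of s] by fastforce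
    then have "s * (P - s * m * Q) \<le> 0" by (simp add: power2_eq_square algebra_simps)
    then show ?thesis using that by (simp add: mult_le_0_iff)
  qed
  have P0: "P \<le> 0"
  proof (rule ccontr)
    assume "\<not> P \<le> 0"
    then have Pp: "P > 0" by simp
    show False
    proof (cases "m * Q = 0")
      case True
      then show ?thesis using Ple[of 1] Pp by auto
    next
      case False
      then have mQ: "m * Q > 0" using Qnn mpos by (simp add: less_le)
      define s where "s = min 1 (P / (2 * m * Q))"
      have s: "s \<in> {0<..1}" using Pp mQ by (auto simp: s_def mult.assoc)
      have "s \<le> P / (2 * m * Q)" by (simp add: s_def)
      then have "s * (m * Q) \<le> P / (2 * m * Q) * (m * Q)"
        using mQ by (intro mult_right_mono) auto
      then have "s * m * Q \<le> P / (2 * m * Q) * (m * Q)" by (simp add: mult.assoc)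
      also have "\<dots> = P / 2" using mQ mpos Qnn by (auto simp: field_simps)
      finally show False using Ple[OF s] Pp by simp
    qed
  qed
  have G: "(\<Sum>i\<in>UNIV. D i * v i - m * (v i)^2) - (\<Sum>i\<in>UNIV. D i * a i - m * (a i)^2) = P - m * Q"
    using expand[of 1] by simp
  have gdiff: "(\<Sum>i\<in>UNIV. c i * v i - (v i)^2) - (\<Sum>i\<in>UNIV. c i * a i - (a i)^2)
      \<le> m * Q + 4 * real CARD('n) / m"
  proof -
    have pt: "(c i * v i - (v i)^2) - (c i * a i - (a i)^2) \<le> m * (v i - a i)^2 + 4 / m" for i
    proof -
      define e where "e = c i - v i - a i"
      have eb: "e^2 \<le> 16"
      proof -
        have "\<bar>e\<bar> \<le> 4" using cb[rule_format, of i] vb[rule_format, of i] ab[rule_format, of i] unfolding e_def by linarith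
        then have "\<bar>e\<bar>^2 \<le> 4^2" by (intro power_mono) auto
        then show ?thesis by simp
      qed
      have "0 \<le> (2 * m * (v i - a i) - e)^2" by simp
      then have "(v i - a i) * e \<le> m * (v i - a i)^2 + e^2 / (4 * m)"
        using mpos by (simp add: field_simps power2_eq_square)
      also have "\<dots> \<le> m * (v i - a i)^2 + 16 / (4 * m)"
        using eb mpos by (simp add: divide_le_cancel field_simps)
      finally show ?thesis by (simp add: e_def power2_eq_square algebra_simps)
    qed
    have "(\<Sum>i\<in>UNIV. c i * v i - (v i)^2) - (\<Sum>i\<in>UNIV. c i * a i - (a i)^2)
        = (\<Sum>i\<in>UNIV. (c i * v i - (v i)^2) - (c i * a i - (a i)^2))"
      by (simp add: sum_subtractf)
    also have "\<dots> \<le> (\<Sum>i\<in>UNIV. m * (v i - a i)^2 + 4 / m)"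
      by (intro sum_mono pt)
    also have "\<dots> = m * Q + 4 * real CARD('n) / m"
      by (simp add: sum.distrib sum_distrib_left Q_def)
    finally show ?thesis .
  qed
  show ?thesis using G gdiff P0 by linarith
qed


lemma base_pt:
  fixes c w a :: real
  assumes "\<bar>c\<bar> \<le> 2" "\<bar>w\<bar> \<le> 1" "\<bar>a\<bar> \<le> 1"
  shows "(c * w - w^2) - (c * a - a^2) \<le> 4"
proof -
  have "0 \<le> (w - c / 2)^2" by simp
  then have 1: "c * w - w^2 \<le> c^2 / 4" by (simp add: power2_eq_square field_simps)
  have "\<bar>c\<bar> * \<bar>c\<bar> \<le> 2 * 2" using assms by (intro mult_mono) auto
  then have 2: "c^2 \<le> 4" by (simp add: power2_eq_square abs_mult[symmetric])
  have "\<bar>c\<bar> * \<bar>a\<bar> \<le> 2 * 1" using assms by (intro mult_mono) auto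
  then have "\<bar>c * a\<bar> \<le> 2" by (simp add: abs_mult)
  then have 3: "c * a \<ge> -2" by linarith
  have "\<bar>a\<bar> * \<bar>a\<bar> \<le> 1 * 1" using assms by (intro mult_mono) auto
  then have 4: "a^2 \<le> 1" by (simp add: power2_eq_square abs_mult[symmetric])
  show ?thesis using 1 2 3 4 by linarith
qed

lemma g_sum:
  fixes d :: "nat \<Rightarrow> 'n::finite \<Rightarrow> real" and w :: "'n \<Rightarrow> real"
  shows "(\<Sum>t\<in>I. \<Sum>i\<in>UNIV. d t i * w i - (w i)^2)
       = (\<Sum>i\<in>UNIV. (\<Sum>t\<in>I. d t i) * w i - real (card I) * (w i)^2)"
  by (subst sum.swap) (simp add: sum_subtractf sum_distrib_right)

lemma conc_lemma:
  fixes b :: "nat \<Rightarrow> real" and c :: real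
  assumes "finite I" "I \<noteq> {}"
  shows "(\<Sum>t\<in>I. c * b t - (b t)^2)
     \<le> real (card I) * (c * ((\<Sum>t\<in>I. b t) / real (card I)) - ((\<Sum>t\<in>I. b t) / real (card I))^2)"
proof -
  define k where "k = real (card I)"
  define m where "m = (\<Sum>t\<in>I. b t) / k"
  have kpos: "k > 0" using assms by (simp add: k_def card_gt_0_iff)
  have sb: "(\<Sum>t\<in>I. b t) = k * m" using kpos by (simp add: m_def)
  have "0 \<le> (\<Sum>t\<in>I. (b t - m)^2)" by (intro sum_nonneg) simp
  also have "\<dots> = (\<Sum>t\<in>I. (b t)^2 - 2 * m * b t + m^2)"
    by (rule sum.cong) (simp_all add: power2_eq_square algebra_simps)
  also have "\<dots> = (\<Sum>t\<in>I. (b t)^2) - 2 * m * (\<Sum>t\<in>I. b t) + k * m^2"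
    by (simp add: sum.distrib sum_subtractf sum_distrib_left k_def)
  finally have sq: "k * m^2 \<le> (\<Sum>t\<in>I. (b t)^2)" using sb by (simp add: power2_eq_square algebra_simps)
  have "(\<Sum>t\<in>I. c * b t - (b t)^2) = c * (k * m) - (\<Sum>t\<in>I. (b t)^2)"
    by (simp add: sum_subtractf sum_distrib_left[symmetric] sb)
  also have "\<dots> \<le> k * (c * m - m^2)" using sq by (simp add: algebra_simps)
  finally show ?thesis by (simp add: k_def m_def)
qed



theorem theorem3:
  fixes H :: "('x \<Rightarrow> real) set" and F :: "('z \<Rightarrow> real) set"
    and y :: "'n::finite \<Rightarrow> real" and x :: "'n \<Rightarrow> 'x" and z :: "'n \<Rightarrow> 'z"
    and T :: nat and hs :: "nat \<Rightarrow> 'x \<Rightarrow> real" and fs :: "nat \<Rightarrow> 'z \<Rightarrow> real"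
  assumes H_range: "\<forall>h\<in>H. \<forall>a. h a \<in> {-1..1}"
    and F_range: "\<forall>f\<in>F. \<forall>c. f c \<in> {-1..1}"
    and y_range: "\<forall>i. y i \<in> {-1..1}"
    and T_pos: "T \<ge> 1"
    and f_oracle: "\<forall>t\<in>{1..T}. fs t \<in> F \<and>
        (\<forall>f\<in>F. oracleF_obj z (\<lambda>i. (y i - prev_avg hs t (x i)) / 2) (fs t)
               \<le> oracleF_obj z (\<lambda>i. (y i - prev_avg hs t (x i)) / 2) f)"
    and h_oracle: "\<forall>t\<in>{1..T}. hs t \<in> H \<and>
        (\<forall>h\<in>H. oracleH_obj x (\<lambda>i. fs t (z i) > 0) (\<lambda>i. \<bar>fs t (z i)\<bar>) h
               \<le> oracleH_obj x (\<lambda>i. fs t (z i) > 0) (\<lambda>i. \<bar>fs t (z i)\<bar>) (hs t))"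
    and A_convex: "convex {(\<chi> i. f (z i)) :: real ^ 'n | f. f \<in> F}"
  shows "(SUP f\<in>F. Psi_n y x z (\<lambda>a. (1 / real T) * (\<Sum>t=1..T. hs t a)) f - norm2n_sq z f)
         \<le> (INF h\<in>H. SUP f\<in>F. Psi_n y x z h f - norm2n_sq z f)
            + 8 * (ln (real T) + 1) / real T"
  proof -
  let ?N = "real CARD('n)"
  have Npos: "?N > 0" by simp
  have Tpos: "real T > 0" using T_pos by simp
  define g where "g c w = (\<Sum>i\<in>UNIV. c i * w i - (w i)^2)" for c w :: "'n \<Rightarrow> real"
  define av where "av t = (\<lambda>i. fs t (z i))" for t
  define dv where "dv t = (\<lambda>i. y i - hs t (x i))" for t
  define W where "W = {w. \<exists>f\<in>F. w = (\<lambda>i. f (z i))}"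
  define Lf where "Lf h f = Psi_n y x z h f - norm2n_sq z f" for h f
  define hbar where "hbar = (\<lambda>a. (1 / real T) * (\<Sum>t=1..T. hs t a))"
  define R where "R = 4 + 4 * (\<Sum>j\<in>{1..<T}. 1 / real j)"
  let ?A = "{(\<chi> i. f (z i)) :: real ^ 'n | f. f \<in> F}"
  have Lf_eq: "Lf h f = (1 / ?N) * g (\<lambda>i. y i - h (x i)) (\<lambda>i. f (z i))" for h f
    by (simp add: Lf_def Psi_n_def norm2n_sq_def g_def sum_subtractf right_diff_distrib)
  have fsF: "fs t \<in> F" if "t \<in> {1..T}" for t using f_oracle that by blast
  have hsH: "hs t \<in> H" if "t \<in> {1..T}" for t using h_oracle that by blast
  have Fb: "\<bar>f c\<bar> \<le> 1" if "f \<in> F" for f c using F_range that by (force simp: abs_le_iff)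
  have Hb: "\<bar>h a\<bar> \<le> 1" if "h \<in> H" for h a using H_range that by (force simp: abs_le_iff)
  have yb: "\<bar>y i\<bar> \<le> 1" for i using y_range by (force simp: abs_le_iff)
  have dvb: "\<bar>dv t i\<bar> \<le> 2" if "t \<in> {1..T}" for t i
    using Hb[OF hsH[OF that], of "x i"] yb[of i] unfolding dv_def by linarith
  have Wb: "\<bar>w i\<bar> \<le> 1" if "w \<in> W" for w i using that Fb unfolding W_def by auto
  have avW: "av t \<in> W" if "t \<in> {1..T}" for t using fsF[OF that] unfolding W_def av_def by auto
  have Wconv: "(\<lambda>i. (1 - s) * p i + s * q i) \<in> W" if pq: "p \<in> W" "q \<in> W" "0 \<le> s" "s \<le> 1" for p q s
  proof -
    obtain fp where fp: "fp \<in> F" "p = (\<lambda>i. fp (z i))" using pq(1) unfolding W_def by auto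
    obtain fq where fq: "fq \<in> F" "q = (\<lambda>i. fq (z i))" using pq(2) unfolding W_def by auto
    have "(1 - s) *\<^sub>R (\<chi> i. fp (z i)) + s *\<^sub>R (\<chi> i. fq (z i)) \<in> ?A"
      by (rule convexD[OF A_convex]) (use fp fq pq in auto)
    then obtain f where f: "f \<in> F"
      "(\<chi> i. f (z i)) = (1 - s) *\<^sub>R (\<chi> i. fp (z i)) + s *\<^sub>R ((\<chi> i. fq (z i)) :: real^'n)"
      by auto
    have "f (z i) = (1 - s) * p i + s * q i" for i
      using arg_cong[OF f(2), of "\<lambda>v. v $ i"] fp fq by simp
    then have e: "(\<lambda>i. (1 - s) * p i + s * q i) = (\<lambda>i. f (z i))" by auto
    show ?thesis using f(1) e unfolding W_def by blast
  qed
  have seg: "\<forall>s\<in>{0<..1}. (\<lambda>i. a i + s * (v i - a i)) \<in> W" if "a \<in> W" "v \<in> W" for a v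
  proof
    fix s :: real assume s: "s \<in> {0<..1}"
    have "(\<lambda>i. a i + s * (v i - a i)) = (\<lambda>i. (1 - s) * a i + s * v i)"
      by (simp add: fun_eq_iff algebra_simps)
    then show "(\<lambda>i. a i + s * (v i - a i)) \<in> W" using Wconv[OF that, of s] s by simp
  qed
  obtain fbar where fbar: "fbar \<in> F" "\<And>i. fbar (z i) = (1 / real T) * (\<Sum>t=1..T. fs t (z i))"
  proof -
    have "(\<Sum>t\<in>{1..T}. (1 / real T) *\<^sub>R ((\<chi> i. fs t (z i)) :: real^'n)) \<in> ?A"
      by (rule convex_sum[OF _ A_convex]) (use Tpos fsF in auto)
    then obtain f where f: "f \<in> F"
      "(\<chi> i. f (z i)) = (\<Sum>t\<in>{1..T}. (1 / real T) *\<^sub>R ((\<chi> i. fs t (z i)) :: real^'n))"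
      by auto
    have "f (z i) = (1 / real T) * (\<Sum>t=1..T. fs t (z i))" for i
      using arg_cong[OF f(2), of "\<lambda>v. v $ i"] by (simp add: sum_distrib_left)
    then show ?thesis using that f(1) by blast
  qed
  have oF: "oracleF_obj z (\<lambda>i. q i / 2) f = (1 / ?N) * ((\<Sum>i\<in>UNIV. (q i / 2)^2) - g q (\<lambda>i. f (z i)))"
    for q and f :: "'z \<Rightarrow> real"
  proof -
    have "(\<Sum>i\<in>UNIV. (q i / 2 - f (z i))^2) = (\<Sum>i\<in>UNIV. (q i / 2)^2 - (q i * f (z i) - (f (z i))^2))"
      by (rule sum.cong) (simp_all add: power2_eq_square algebra_simps)
    then show ?thesis unfolding oracleF_obj_def g_def by (simp add: sum_subtractf)
  qed
  have foptg: "g (\<lambda>i. y i - prev_avg hs t (x i)) w \<le> g (\<lambda>i. y i - prev_avg hs t (x i)) (av t)"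
    if tw: "t \<in> {1..T}" "w \<in> W" for t w
  proof -
    obtain f where f: "f \<in> F" "w = (\<lambda>i. f (z i))" using tw(2) unfolding W_def by auto
    have "oracleF_obj z (\<lambda>i. (y i - prev_avg hs t (x i)) / 2) (fs t)
        \<le> oracleF_obj z (\<lambda>i. (y i - prev_avg hs t (x i)) / 2) f"
      using f_oracle tw(1) f(1) by blast
    then show ?thesis using Npos unfolding oF f(2) av_def by (simp add: divide_le_cancel)
  qed
  have claim: "\<forall>v\<in>W. (\<Sum>t=1..m. g (dv t) v)
      \<le> (\<Sum>t=1..m. g (dv t) (av t)) + ?N * (4 + 4 * (\<Sum>j\<in>{1..<m}. 1 / real j))"
    if "1 \<le> m" "m \<le> T" for m
    using that
  proof (induction m rule: nat_induct_at_least)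
    case base
    show ?case
    proof
      fix v assume v: "v \<in> W"
      have "g (dv 1) v - g (dv 1) (av 1)
          = (\<Sum>i\<in>UNIV. (dv 1 i * v i - (v i)^2) - (dv 1 i * av 1 i - (av 1 i)^2))"
        by (simp add: g_def sum_subtractf)
      also have "\<dots> \<le> (\<Sum>i\<in>(UNIV::'n set). 4)"
      proof (rule sum_mono)
        fix i
        show "(dv 1 i * v i - (v i)^2) - (dv 1 i * av 1 i - (av 1 i)^2) \<le> 4"
          by (rule base_pt) (use dvb[of 1 i] Wb[OF v, of i] Wb[OF avW[of 1], of i] base in auto)
      qed
      also have "\<dots> = 4 * ?N" by simp
      finally show "(\<Sum>t=1..1. g (dv t) v)
          \<le> (\<Sum>t=1..1. g (dv t) (av t)) + ?N * (4 + 4 * (\<Sum>j\<in>{1..<1}. 1 / real j))"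
        by simp
    qed
  next
    case (Suc m)
    have mT: "m \<le> T" "Suc m \<le> T" using Suc by auto
    have m1: "m \<ge> 1" using Suc.hyps .
    have mpos: "real m > 0" using m1 by simp
    define D where "D i = (\<Sum>t\<in>{1..m}. dv t i)" for i
    have Gm: "(\<Sum>t=1..m. g (dv t) w) = (\<Sum>i\<in>UNIV. D i * w i - real m * (w i)^2)" for w
      unfolding g_def D_def using g_sum[where d=dv and I="{1..m}" and w=w] by simp
    have pa: "prev_avg hs (Suc m) a = (1 / real m) * (\<Sum>t=1..m. hs t a)" for a
      using m1 by (simp add: prev_avg_def)
    have Dq: "D i = real m * (y i - prev_avg hs (Suc m) (x i))" for i
      using mpos by (simp add: D_def dv_def pa sum_subtractf algebra_simps)
    have Dg: "(\<Sum>i\<in>UNIV. D i * w i - real m * (w i)^2)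
        = real m * g (\<lambda>i. y i - prev_avg hs (Suc m) (x i)) w" for w
      unfolding g_def Dq by (simp add: sum_distrib_left algebra_simps)
    have sm: "Suc m \<in> {1..T}" using mT by simp
    have opt: "\<forall>w\<in>W. (\<Sum>i\<in>UNIV. D i * w i - real m * (w i)^2)
        \<le> (\<Sum>i\<in>UNIV. D i * av (Suc m) i - real m * (av (Suc m) i)^2)"
      unfolding Dg using foptg[OF sm] mpos by (simp add: mult_le_cancel_left_pos)
    show ?case
    proof
      fix v assume v: "v \<in> W"
      have st: "(\<Sum>i\<in>UNIV. D i * v i - real m * (v i)^2) + g (dv (Suc m)) v
          \<le> (\<Sum>i\<in>UNIV. D i * av (Suc m) i - real m * (av (Suc m) i)^2) + g (dv (Suc m)) (av (Suc m))
            + 4 * ?N / real m"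
        unfolding g_def
        by (rule step_lemma[OF mpos opt seg[OF avW[OF sm] v]])
           (use dvb[OF sm] Wb[OF v] Wb[OF avW[OF sm]] in auto)
      have ih: "(\<Sum>t=1..m. g (dv t) (av (Suc m)))
          \<le> (\<Sum>t=1..m. g (dv t) (av t)) + ?N * (4 + 4 * (\<Sum>j\<in>{1..<m}. 1 / real j))"
        using Suc.IH mT avW[OF sm] by blast
      have Hs: "(\<Sum>j\<in>{1..<Suc m}. 1 / real j) = (\<Sum>j\<in>{1..<m}. 1 / real j) + 1 / real m"
        using m1 by (simp add: sum.atLeastLessThan_Suc)
      have "?N * (4 + 4 * (\<Sum>j\<in>{1..<Suc m}. 1 / real j))
          = ?N * (4 + 4 * (\<Sum>j\<in>{1..<m}. 1 / real j)) + 4 * ?N / real m"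
        unfolding Hs by (simp add: algebra_simps)
      then show "(\<Sum>t=1..Suc m. g (dv t) v)
          \<le> (\<Sum>t=1..Suc m. g (dv t) (av t)) + ?N * (4 + 4 * (\<Sum>j\<in>{1..<Suc m}. 1 / real j))"
        using st ih Gm[of v] Gm[of "av (Suc m)"] by simp
    qed
  qed
  have Rb: "R \<le> 8 * (ln (real T) + 1)"
  proof -
    have "(\<Sum>j\<in>{1..<T}. 1 / real j) \<le> (\<Sum>j\<in>{1..T}. 1 / real j)"
      by (rule sum_mono2) auto
    also have "\<dots> \<le> 1 + ln (real T)" by (rule harm_bound[OF T_pos])
    finally have "(\<Sum>j\<in>{1..<T}. 1 / real j) \<le> 1 + ln (real T)" .
    moreover have "ln (real T) \<ge> 0" using T_pos by simp
    ultimately show ?thesis unfolding R_def by (simp add: algebra_simps)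
  qed
  have gsplit: "g (\<lambda>i. y i - h (x i)) w = (\<Sum>i\<in>UNIV. y i * w i - (w i)^2) - (\<Sum>i\<in>UNIV. w i * h (x i))"
    for h w
    unfolding g_def by (simp add: sum_subtractf[symmetric] algebra_simps)
  have oH: "oracleH_obj x (\<lambda>i. f i > 0) (\<lambda>i. \<bar>f i\<bar>) h
      = (1 / ?N) * ((\<Sum>i\<in>UNIV. \<bar>f i\<bar> / 2) + (1 / 2) * (\<Sum>i\<in>UNIV. f i * h (x i)))"
    for f :: "'n \<Rightarrow> real" and h :: "'x \<Rightarrow> real"
  proof -
    have "(\<Sum>i\<in>UNIV. \<bar>f i\<bar> * bern_agree ((1 + h (x i)) / 2) (f i > 0))
        = (\<Sum>i\<in>UNIV. \<bar>f i\<bar> / 2 + (1 / 2) * (f i * h (x i)))"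
      by (rule sum.cong) (auto simp: bern_agree_def field_simps)
    then show ?thesis unfolding oracleH_obj_def by (simp add: sum.distrib sum_distrib_left)
  qed
  have hopt: "g (dv t) (av t) \<le> g (\<lambda>i. y i - h (x i)) (av t)" if "t \<in> {1..T}" "h \<in> H" for t h
  proof -
    have "oracleH_obj x (\<lambda>i. av t i > 0) (\<lambda>i. \<bar>av t i\<bar>) h
        \<le> oracleH_obj x (\<lambda>i. av t i > 0) (\<lambda>i. \<bar>av t i\<bar>) (hs t)"
      using h_oracle that unfolding av_def by blast
    then have "(\<Sum>i\<in>UNIV. av t i * h (x i)) \<le> (\<Sum>i\<in>UNIV. av t i * hs t (x i))"
      using Npos unfolding oH by (simp add: divide_le_cancel)
    then show ?thesis unfolding dv_def gsplit by simp
  qed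
  have bdd: "bdd_above (Lf h ` F)" if "h \<in> H" for h
  proof (rule bdd_aboveI2)
    fix f assume f: "f \<in> F"
    have "g (\<lambda>i. y i - h (x i)) (\<lambda>i. f (z i)) \<le> (\<Sum>i\<in>(UNIV::'n set). 2)"
      unfolding g_def
    proof (intro sum_mono)
      fix i
      have "\<bar>y i - h (x i)\<bar> * \<bar>f (z i)\<bar> \<le> 2 * 1"
        using yb[of i] Hb[OF that, of "x i"] Fb[OF f, of "z i"] by (intro mult_mono) auto
      then have "\<bar>(y i - h (x i)) * f (z i)\<bar> \<le> 2" by (simp add: abs_mult)
      then have "(y i - h (x i)) * f (z i) \<le> 2" by linarith
      then show "(y i - h (x i)) * f (z i) - (f (z i))^2 \<le> 2" using zero_le_power2[of "f (z i)"] by linarith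
    qed
    then have "g (\<lambda>i. y i - h (x i)) (\<lambda>i. f (z i)) \<le> 2 * ?N" by simp
    then show "Lf h f \<le> 2" unfolding Lf_eq using Npos by (simp add: field_simps)
  qed
  have key: "Lf hbar u \<le> (SUP f\<in>F. Lf h f) + 8 * (ln (real T) + 1) / real T"
    if u: "u \<in> F" and h: "h \<in> H" for u h
  proof -
    define w where "w = (\<lambda>i. u (z i))"
    have wW: "w \<in> W" using u unfolding W_def w_def by auto
    define Dt where "Dt i = (\<Sum>t\<in>{1..T}. dv t i)" for i
    have Dt: "Dt i = real T * (y i - hbar (x i))" for i
      using Tpos by (simp add: Dt_def dv_def hbar_def sum_subtractf algebra_simps)
    have e1: "(\<Sum>t=1..T. g (dv t) w) = real T * g (\<lambda>i. y i - hbar (x i)) w"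
    proof -
      have "(\<Sum>t=1..T. g (dv t) w) = (\<Sum>i\<in>UNIV. Dt i * w i - real T * (w i)^2)"
        unfolding g_def Dt_def using g_sum[where d=dv and I="{1..T}" and w=w] by simp
      also have "\<dots> = real T * g (\<lambda>i. y i - hbar (x i)) w"
        unfolding g_def Dt by (simp add: sum_distrib_left algebra_simps)
      finally show ?thesis .
    qed
    have e2: "(\<Sum>t=1..T. g (dv t) w) \<le> (\<Sum>t=1..T. g (dv t) (av t)) + ?N * R"
      using claim[OF T_pos order.refl] wW unfolding R_def by blast
    have e3: "(\<Sum>t=1..T. g (dv t) (av t)) \<le> (\<Sum>t=1..T. g (\<lambda>i. y i - h (x i)) (av t))"
      by (intro sum_mono hopt h) auto
    have e4: "(\<Sum>t=1..T. g (\<lambda>i. y i - h (x i)) (av t)) \<le> real T * g (\<lambda>i. y i - h (x i)) (\<lambda>i. fbar (z i))"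
    proof -
      have "(\<Sum>t=1..T. g (\<lambda>i. y i - h (x i)) (av t))
          = (\<Sum>i\<in>UNIV. \<Sum>t\<in>{1..T}. (y i - h (x i)) * fs t (z i) - (fs t (z i))^2)"
        unfolding g_def av_def by (rule sum.swap)
      also have "\<dots> \<le> (\<Sum>i\<in>UNIV. real T * ((y i - h (x i)) * fbar (z i) - (fbar (z i))^2))"
      proof (intro sum_mono)
        fix i
        have "(\<Sum>t\<in>{1..T}. (y i - h (x i)) * fs t (z i) - (fs t (z i))^2)
          \<le> real (card {1..T}) * ((y i - h (x i)) * ((\<Sum>t\<in>{1..T}. fs t (z i)) / real (card {1..T}))
             - ((\<Sum>t\<in>{1..T}. fs t (z i)) / real (card {1..T}))^2)"
          by (rule conc_lemma) (use T_pos in auto)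
        also have "(\<Sum>t\<in>{1..T}. fs t (z i)) / real (card {1..T}) = fbar (z i)"
          using fbar(2)[of i] by simp
        finally show "(\<Sum>t\<in>{1..T}. (y i - h (x i)) * fs t (z i) - (fs t (z i))^2)
          \<le> real T * ((y i - h (x i)) * fbar (z i) - (fbar (z i))^2)" by simp
      qed
      also have "\<dots> = real T * g (\<lambda>i. y i - h (x i)) (\<lambda>i. fbar (z i))"
        unfolding g_def by (simp add: sum_distrib_left)
      finally show ?thesis .
    qed
    have e5: "g (\<lambda>i. y i - h (x i)) (\<lambda>i. fbar (z i)) = ?N * Lf h fbar"
      unfolding Lf_eq using Npos by simp
    have e6: "Lf h fbar \<le> (SUP f\<in>F. Lf h f)"
      by (rule cSUP_upper[OF fbar(1) bdd[OF h]])
    have "real T * g (\<lambda>i. y i - hbar (x i)) w \<le> real T * (?N * Lf h fbar) + ?N * R"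
      using e1 e2 e3 e4 unfolding e5 by linarith
    then have "real T * (?N * Lf hbar u) \<le> real T * (?N * Lf h fbar) + ?N * R"
      unfolding Lf_eq w_def using Npos by simp
    then have "?N * (real T * Lf hbar u) \<le> ?N * (real T * Lf h fbar + R)"
      by (simp add: algebra_simps)
    then have "real T * Lf hbar u \<le> real T * Lf h fbar + R"
      using Npos by (simp add: mult_le_cancel_left_pos)
    then have "Lf hbar u \<le> Lf h fbar + R / real T"
      using Tpos by (simp add: field_simps)
    also have "R / real T \<le> 8 * (ln (real T) + 1) / real T"
      using Rb Tpos by (simp add: divide_right_mono)
    finally show ?thesis using e6 by linarith
  qed
  have Fne: "F \<noteq> {}" using fsF[of 1] T_pos by auto
  have Hne: "H \<noteq> {}" using hsH[of 1] T_pos by auto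
  have "(SUP u\<in>F. Lf hbar u) \<le> (INF h\<in>H. SUP f\<in>F. Lf h f) + 8 * (ln (real T) + 1) / real T"
  proof (rule cSUP_least[OF Fne])
    fix u assume u: "u \<in> F"
    have "Lf hbar u - 8 * (ln (real T) + 1) / real T \<le> (INF h\<in>H. SUP f\<in>F. Lf h f)"
      by (rule cINF_greatest[OF Hne]) (use key[OF u] in fastforce)
    then show "Lf hbar u \<le> (INF h\<in>H. SUP f\<in>F. Lf h f) + 8 * (ln (real T) + 1) / real T"
      by linarith
  qed
  then show ?thesis by (simp add: Lf_def hbar_def)
qed


end
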